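(* Let $f(z)=\sum_{k=0}^\infty a_kz^{n_k}$ be analytic in $\mathbb D$, where $\{n_k\}$ are positive integers with $n_{k+1}\ge\lambda n_k$ for all $k$ and some $\lambda>1$. If $\sum_{k=0}^\infty|a_k|^2(\log n_k)^3<\infty$, then $f\in BMOA_{\log}\cap H^\infty$.
   Context: $\mathbb D$ is the open unit disc, $dA=\frac1\pi dx\,dy$, $H^\infty$ is the space of bounded analytic functions on $\mathbb D$. For an arc $I\subset\partial\mathbb D$ of length $|I|$, $S(I)=\{re^{it}: e^{it}\in I,\ 1-\frac{|I|}{2\pi}\le r<1\}$. $BMOA_{\log}$ is the space of $g\in H^1$ for which there is $C>0$ with $\int_{S(I)}(1-|z|^2)|g'(z)|^2\,dA(z)\le C|I|\left(\log\frac{2}{|I|}\right)^{-2}$ for every arc $I$. *)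

theory Defs
  imports "HOL-Analysis.Analysis"
begin

abbreviation unit_disc :: "complex set" where
  "unit_disc \<equiv> ball 0 1"

definition Hinf :: "(complex \<Rightarrow> complex) set" where
  "Hinf = {f. f holomorphic_on unit_disc \<and> bounded (f ` unit_disc)}"

definition circle_mean :: "(complex \<Rightarrow> complex) \<Rightarrow> real \<Rightarrow> real" where
  "circle_mean f r = (1 / (2 * pi)) * integral {0..2*pi} (\<lambda>t. norm (f (of_real r * cis t)))"

definition H1 :: "(complex \<Rightarrow> complex) set" where
  "H1 = {f. f holomorphic_on unit_disc \<and> bdd_above (circle_mean f ` {0..<1})}"

text \<open>Carleson box S(I) over the arc I = {e^{it} : theta \<le> t \<le> theta + l}, |I| = l, 0 < l \<le> 2 pi.\<close>
definition carleson_box :: "real \<Rightarrow> real \<Rightarrow> complex set" where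
  "carleson_box theta l =
     {of_real r * cis t | r t. theta \<le> t \<and> t \<le> theta + l \<and> 1 - l / (2 * pi) \<le> r \<and> r < 1}"

text \<open>BMOA_log. dA = (1/pi) dx dy. When |I| = 2 the right-hand side
  |I| (log(2/|I|))^(-2) is +infinity, so the condition is vacuous there.\<close>
definition BMOA_log :: "(complex \<Rightarrow> complex) set" where
  "BMOA_log = {g. g \<in> H1 \<and>
     (\<exists>C>0. \<forall>theta l. 0 < l \<and> l \<le> 2 * pi \<and> l \<noteq> 2 \<longrightarrow>
        (\<integral>\<^sup>+ z \<in> carleson_box theta l.
            ennreal ((1 - (cmod z)\<^sup>2) * (cmod (deriv g z))\<^sup>2 / pi) \<partial>lborel)
        \<le> ennreal (C * l / (ln (2 / l))\<^sup>2))}"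

end

theory Submission
  imports Defs
begin

lemma cis_sub1: "cmod (cis t - 1) \<le> \<bar>t\<bar>"
proof -
  have "(cmod (cis t - 1))^2 = (cos t - 1)^2 + (sin t)^2"
    by (simp add: cmod_def)
  also have "\<dots> = 2 - 2 * cos t" using sin_cos_squared_add[of t] by (simp add: power2_eq_square algebra_simps)
  also have "cos t = 1 - 2 * (sin (t/2))^2" using cos_double_sin[of "t/2"] by simp
  also have "2 - 2 * (1 - 2 * (sin (t/2))^2) = (2 * sin (t/2))^2" by (simp add: power2_eq_square)
  finally have e: "(cmod (cis t - 1))^2 = (2 * sin (t/2))^2" .
  have "\<bar>sin (t/2)\<bar> \<le> \<bar>t/2\<bar>" by (rule abs_sin_x_le_abs_x)
  then have "\<bar>2 * sin (t/2)\<bar> \<le> \<bar>t\<bar>" by simp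
  then have "(2 * sin (t/2))^2 \<le> t^2" by (simp add: abs_le_square_iff)
  then have "(cmod (cis t - 1))^2 \<le> t^2" using e by simp
  then have "\<bar>cmod (cis t - 1)\<bar> \<le> \<bar>t\<bar>" by (simp only: abs_le_square_iff)
  then show ?thesis by simp
qed

lemma cis_dist: "cmod (cis s - cis t) \<le> \<bar>s - t\<bar>"
proof -
  have "cis s - cis t = cis t * (cis (s - t) - 1)" by (simp add: right_diff_distrib cis_mult)
  then have "cmod (cis s - cis t) = cmod (cis (s-t) - 1)" by (simp add: norm_mult)
  then show ?thesis using cis_sub1 by simp
qed



locale lac =
  fixes a :: "nat \<Rightarrow> complex" and n :: "nat \<Rightarrow> nat"
    and f :: "complex \<Rightarrow> complex" and lam :: real
  assumes npos: "\<And>k. n k > 0"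
    and lam1: "lam > 1"
    and ngrow: "\<And>k. real (n (Suc k)) \<ge> lam * real (n k)"
    and fhol: "f holomorphic_on unit_disc"
    and fsums: "\<And>z. z \<in> unit_disc \<Longrightarrow> (\<lambda>k. a k * z ^ n k) sums f z"
    and summ: "summable (\<lambda>k. (cmod (a k))\<^sup>2 * (ln (real (n k))) ^ 3)"
begin

definition b where "b k = cmod (a k)"

lemma b_nonneg: "b k \<ge> 0" by (simp add: b_def)

lemma n_less: "n k < n (Suc k)"
proof -
  have "real (n k) < lam * real (n k)" using npos[of k] lam1 by simp
  also have "\<dots> \<le> real (n (Suc k))" by (rule ngrow)
  finally show ?thesis by simp
qed

lemma n_smono: "strict_mono n"
  using n_less by (simp add: strict_mono_Suc_iff)

lemma n_pow: "real (n k) \<ge> lam ^ k"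
proof (induction k)
  case 0 then show ?case using npos[of 0] by simp
next
  case (Suc k)
  have "lam ^ Suc k = lam * lam ^ k" by simp
  also have "\<dots> \<le> lam * real (n k)" using Suc lam1 by simp
  also have "\<dots> \<le> real (n (Suc k))" by (rule ngrow)
  finally show ?case .
qed

lemma ln_n_ge: "ln (real (n k)) \<ge> real k * ln lam"
proof -
  have "ln (lam ^ k) \<le> ln (real (n k))"
    using n_pow[of k] lam1 npos[of k] by (subst ln_le_cancel_iff) auto
  then show ?thesis using lam1 by (simp add: ln_realpow)
qed

lemma ln_n_nonneg: "ln (real (n k)) \<ge> 0"
  using npos[of k] by simp

lemma amgm: "(x::real) \<le> (x^2 * t + 1 / t) / 2" if "t > 0" for x t
proof -
  have "0 \<le> (x * t - 1)^2" by simp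
  then have "2 * x * t \<le> x^2 * t^2 + 1" by (simp add: power2_eq_square algebra_simps)
  then show ?thesis using that by (simp add: field_simps power2_eq_square)
qed

lemma b_summable: "summable b"
proof -
  define L where "L = ln lam"
  have L: "L > 0" using lam1 by (simp add: L_def)
  have s1: "summable (\<lambda>k. inverse (real k ^ 3))"
    by (rule inverse_power_summable) simp
  have s2: "summable (\<lambda>k. ((b k)\<^sup>2 * (ln (real (n k))) ^ 3 + inverse (L^3) * inverse (real k ^ 3)) / 2)"
    using summ s1 by (intro summable_divide summable_add summable_mult) (auto simp: b_def)
  show ?thesis
  proof (rule summable_comparison_test'[OF s2, of 1])
    fix k :: nat assume k: "1 \<le> k"
    define t where "t = (real k * L) ^ 3"
    have t: "t > 0" using k L by (simp add: t_def)
    have "b k \<le> ((b k)^2 * t + 1 / t) / 2" by (rule amgm[OF t])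
    also have "(b k)^2 * t \<le> (b k)\<^sup>2 * (ln (real (n k))) ^ 3"
      unfolding t_def
      by (intro mult_left_mono power_mono) (use ln_n_ge[of k] L k in \<open>auto simp: L_def\<close>)
    also have "1 / t = inverse (L^3) * inverse (real k ^ 3)"
      by (simp add: t_def power_mult_distrib field_simps)
    finally show "norm (b k) \<le> ((b k)\<^sup>2 * (ln (real (n k))) ^ 3 + inverse (L^3) * inverse (real k ^ 3)) / 2"
      using b_nonneg[of k] by simp
  qed
qed

definition Sb where "Sb = suminf b"

lemma Sb_nonneg: "Sb \<ge> 0"
  unfolding Sb_def using b_summable b_nonneg by (simp add: suminf_nonneg)

lemma b_le_Sb: "b k \<le> Sb"
  unfolding Sb_def using sum_le_suminf[OF b_summable, of "{k}"] b_nonneg by simp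

lemma f_bound: assumes "z \<in> unit_disc" shows "cmod (f z) \<le> Sb"
proof -
  have nz: "norm z \<le> 1" using assms by simp
  have le: "norm (a k * z ^ n k) \<le> b k" for k
    using nz by (simp add: b_def norm_mult norm_power mult_left_le power_le_one)
  have sn: "summable (\<lambda>k. norm (a k * z ^ n k))"
    by (rule summable_comparison_test[OF _ b_summable]) (use le in auto)
  have "f z = (\<Sum>k. a k * z ^ n k)" using fsums[OF assms] by (simp add: sums_iff)
  then have "cmod (f z) \<le> (\<Sum>k. norm (a k * z ^ n k))"
    using summable_norm[OF sn] by simp
  also have "\<dots> \<le> Sb" unfolding Sb_def
    by (rule suminf_le[OF le sn b_summable])
  finally show ?thesis .
qed

lemma f_Hinf: "f \<in> Hinf"
  unfolding Hinf_def using fhol f_bound unfolding bounded_iff by blast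

lemma f_H1: "f \<in> H1"
proof -
  have "circle_mean f r \<le> Sb" if r: "0 \<le> r" "r < 1" for r
  proof -
    have inD: "of_real r * cis t \<in> unit_disc" for t using r by (simp add: norm_mult)
    have inD': "cmod (of_real r * cis t) < 1" for t using inD[of t] by simp
    have cf: "continuous_on unit_disc f" using fhol by (rule holomorphic_on_imp_continuous_on)
    have "continuous_on {0..2*pi} (\<lambda>t. norm (f (of_real r * cis t)))"
      by (intro continuous_on_norm continuous_on_compose2[OF cf]) (auto intro!: continuous_intros simp: inD')
    then have int: "(\<lambda>t. norm (f (of_real r * cis t))) integrable_on {0..2*pi}"
      by (rule integrable_continuous_interval)
    have "integral {0..2*pi} (\<lambda>t. norm (f (of_real r * cis t))) \<le> integral {0..2*pi} (\<lambda>t. Sb)"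
      by (rule integral_le[OF int]) (use f_bound inD in auto)
    also have "\<dots> = 2 * pi * Sb" by simp
    finally show ?thesis unfolding circle_mean_def by (simp add: field_simps)
  qed
  then show ?thesis unfolding H1_def using fhol by (auto intro!: bdd_aboveI2)
qed

definition c where "c = lam / (lam - 1)"

lemma c_ge1: "c \<ge> 1" using lam1 by (simp add: c_def field_simps)

lemma n_le_c: "real (n (Suc k)) \<le> c * (real (n (Suc k)) - real (n k))"
proof -
  have "real (n k) \<le> real (n (Suc k)) / lam" using ngrow[of k] lam1 by (simp add: field_simps)
  then have "real (n (Suc k)) - real (n (Suc k)) / lam \<le> real (n (Suc k)) - real (n k)" by simp
  moreover have "real (n (Suc k)) - real (n (Suc k)) / lam = real (n (Suc k)) / c"
    using lam1 by (simp add: c_def field_simps)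
  ultimately show ?thesis using c_ge1 by (simp add: field_simps)
qed

lemma sum_block: assumes "a0 \<le> b0" "0 \<le> r" "r \<le> (1::real)"
  shows "real (b0 - a0) * r ^ (b0 - 1) \<le> (\<Sum>m\<in>{a0..<b0}. r ^ m)"
proof -
  have "of_nat (card {a0..<b0}) * r ^ (b0 - 1) \<le> (\<Sum>m\<in>{a0..<b0}. r ^ m)"
    by (rule sum_bounded_below) (use assms in \<open>auto intro!: power_decreasing\<close>)
  then show ?thesis by simp
qed

lemma lac_partial: assumes "0 \<le> r" "r \<le> (1::real)"
  shows "(\<Sum>k<Suc K. real (n k) * r ^ (n k - 1)) \<le> c * (\<Sum>m<n K. r ^ m)"
proof (induction K)
  case 0
  have "real (n 0) * r ^ (n 0 - 1) \<le> (\<Sum>m\<in>{0..<n 0}. r ^ m)"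
    using sum_block[of 0 "n 0" r] assms by simp
  also have "\<dots> \<le> c * (\<Sum>m<n 0. r ^ m)"
  proof -
    have S0: "0 \<le> (\<Sum>m<n 0. r ^ m)" using assms by (simp add: sum_nonneg)
    show ?thesis using mult_right_mono[OF c_ge1 S0] by (simp add: atLeast0LessThan)
  qed
  finally show ?case by simp
next
  case (Suc K)
  have nl: "n K \<le> n (Suc K)" using n_less[of K] by simp
  have "real (n (Suc K)) * r ^ (n (Suc K) - 1) \<le> c * (real (n (Suc K)) - real (n K)) * r ^ (n (Suc K) - 1)"
    using n_le_c[of K] assms by (intro mult_right_mono) auto
  also have "\<dots> = c * (real (n (Suc K) - n K) * r ^ (n (Suc K) - 1))"
    using nl by (simp add: of_nat_diff)
  also have "\<dots> \<le> c * (\<Sum>m\<in>{n K..<n (Suc K)}. r ^ m)"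
    using sum_block[OF nl assms] c_ge1 by (intro mult_left_mono) auto
  finally have step: "real (n (Suc K)) * r ^ (n (Suc K) - 1) \<le> c * (\<Sum>m\<in>{n K..<n (Suc K)}. r ^ m)" .
  have split: "(\<Sum>m<n (Suc K). r ^ m) = (\<Sum>m<n K. r ^ m) + (\<Sum>m\<in>{n K..<n (Suc K)}. r ^ m)"
    using nl by (metis atLeast0LessThan sum.atLeastLessThan_concat zero_le)
  show ?case using Suc step split by (simp add: distrib_left)
qed

lemma lac_sum: assumes "0 \<le> r" "r < (1::real)"
  shows "summable (\<lambda>k. real (n k) * r ^ (n k - 1))"
    and "(\<Sum>k. real (n k) * r ^ (n k - 1)) \<le> c / (1 - r)"
proof -
  have geo: "(\<Sum>m<N. r ^ m) \<le> 1 / (1 - r)" for N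
    using assms by (simp add: sum_gp_strict divide_right_mono)
  have ps: "(\<Sum>k<K. real (n k) * r ^ (n k - 1)) \<le> c / (1 - r)" for K
  proof (cases K)
    case 0 then show ?thesis using assms c_ge1 by simp
  next
    case (Suc K')
    have "(\<Sum>k<K. real (n k) * r ^ (n k - 1)) \<le> c * (\<Sum>m<n K'. r ^ m)"
      using lac_partial[of r K'] assms Suc by simp
    also have "\<dots> \<le> c * (1 / (1 - r))" using geo c_ge1 by (intro mult_left_mono) auto
    finally show ?thesis by simp
  qed
  show sm: "summable (\<lambda>k. real (n k) * r ^ (n k - 1))"
    by (rule summableI_nonneg_bounded[OF _ ps]) (use assms in auto)
  show "(\<Sum>k. real (n k) * r ^ (n k - 1)) \<le> c / (1 - r)"
    by (rule suminf_le_const[OF sm ps])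
qed

end


context lac begin

lemma deriv_f: assumes z: "z \<in> unit_disc"
  shows "summable (\<lambda>k. b k * (real (n k) * cmod z ^ (n k - 1)))"
    and "cmod (deriv f z) \<le> (\<Sum>k. b k * (real (n k) * cmod z ^ (n k - 1)))"
proof -
  define \<rho> where "\<rho> = (1 + cmod z) / 2"
  have \<rho>: "0 \<le> \<rho>" "\<rho> < 1" "cmod z < \<rho>" using z by (auto simp: \<rho>_def)
  define S where "S = cball (0::complex) \<rho>"
  define F where "F k x = a k * x ^ n k" for k x
  define F' where "F' k x = a k * (of_nat (n k) * x ^ (n k - 1))" for k x
  have dF: "(F k has_field_derivative F' k x) (at x within S)" for k x
  proof -
    have "((\<lambda>x. x ^ n k) has_field_derivative of_nat (n k) * x ^ (n k - 1)) (at x)"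
      using DERIV_power[OF DERIV_ident, of "n k" x UNIV] by (simp only: mult_1 One_nat_def)
    from DERIV_cmult[OF this, of "a k"] show ?thesis unfolding F_def F'_def
      by (rule has_field_derivative_at_within)
  qed
  have sm\<rho>: "summable (\<lambda>k. Sb * (real (n k) * \<rho> ^ (n k - 1)))"
    using lac_sum(1)[OF \<rho>(1,2)] by (rule summable_mult)
  have bnd: "norm (F' k x) \<le> Sb * (real (n k) * \<rho> ^ (n k - 1))" if "x \<in> S" for k x
  proof -
    have "norm (F' k x) = b k * (real (n k) * cmod x ^ (n k - 1))"
      by (simp add: F'_def b_def norm_mult norm_power)
    also have "\<dots> \<le> Sb * (real (n k) * \<rho> ^ (n k - 1))"
    proof -
      have "cmod x \<le> \<rho>" using that by (simp add: S_def)
      then have "cmod x ^ (n k - 1) \<le> \<rho> ^ (n k - 1)" by (rule power_mono) simp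
      then have "real (n k) * cmod x ^ (n k - 1) \<le> real (n k) * \<rho> ^ (n k - 1)"
        by (rule mult_left_mono) simp
      then show ?thesis using Sb_nonneg
        by (intro mult_mono[OF b_le_Sb[of k]]) auto
    qed
    finally show ?thesis .
  qed
  have uc: "uniformly_convergent_on S (\<lambda>k x. \<Sum>i<k. F' i x)"
    by (rule Weierstrass_m_test'[OF bnd sm\<rho>])
  have zS: "z \<in> S" "z \<in> interior S" using \<rho> by (auto simp: S_def)
  have smz: "summable (\<lambda>k. F k z)" using fsums[OF z] unfolding F_def by (auto simp: sums_iff)
  have D: "((\<lambda>x. \<Sum>k. F k x) has_field_derivative (\<Sum>k. F' k z)) (at z)"
    by (rule has_field_derivative_series'(2)[OF _ dF uc zS(1) smz zS(2)]) (simp add: S_def)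
  have D2: "(f has_field_derivative (\<Sum>k. F' k z)) (at z)"
  proof (rule has_field_derivative_transform_within_open[OF D, of unit_disc])
    fix x :: complex assume x: "x \<in> unit_disc"
    show "(\<Sum>k. F k x) = f x" unfolding F_def using sums_unique[OF fsums[OF x]] by simp
  qed (use z in auto)
  have eq: "deriv f z = (\<Sum>k. F' k z)" using D2 by (rule DERIV_imp_deriv)
  have nF: "norm (F' k z) = b k * (real (n k) * cmod z ^ (n k - 1))" for k
    by (simp add: F'_def b_def norm_mult norm_power)
  have sN: "summable (\<lambda>k. norm (F' k z))"
    by (rule summable_comparison_test[OF _ sm\<rho>]) (use bnd zS in auto)
  then show "summable (\<lambda>k. b k * (real (n k) * cmod z ^ (n k - 1)))" using nF by simp
  have "cmod (deriv f z) \<le> (\<Sum>k. norm (F' k z))" unfolding eq by (rule summable_norm[OF sN])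
  then show "cmod (deriv f z) \<le> (\<Sum>k. b k * (real (n k) * cmod z ^ (n k - 1)))" using nF by simp
qed

end



lemma series_CS:
  fixes p q :: "nat \<Rightarrow> real"
  assumes p0: "\<And>k. 0 \<le> p k" and q0: "\<And>k. 0 \<le> q k" and sp: "summable p" and sq: "summable q"
    and sw: "summable w" and that: "\<And>k. w k = sqrt (p k) * sqrt (q k)"
  shows "(suminf w)\<^sup>2 \<le> suminf p * suminf q"
proof -
  have ps: "(\<Sum>k<N. w k)\<^sup>2 \<le> suminf p * suminf q" for N
  proof -
    have "(\<Sum>k<N. w k)\<^sup>2 = (\<Sum>k<N. sqrt (p k) * sqrt (q k))\<^sup>2" using that by simp
    also have "\<dots> \<le> (\<Sum>k<N. (sqrt (p k))\<^sup>2) * (\<Sum>k<N. (sqrt (q k))\<^sup>2)"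
      by (rule Cauchy_Schwarz_ineq_sum)
    also have "\<dots> = (\<Sum>k<N. p k) * (\<Sum>k<N. q k)" using p0 q0 by simp
    also have "\<dots> \<le> suminf p * suminf q"
      by (intro mult_mono sum_le_suminf sp sq) (auto simp: p0 q0 sum_nonneg suminf_nonneg sp sq)
    finally show ?thesis .
  qed
  have "(\<lambda>N. (\<Sum>k<N. w k)\<^sup>2) \<longlonglongrightarrow> (suminf w)\<^sup>2"
    using summable_LIMSEQ[OF sw] by (intro tendsto_intros)
  then show ?thesis by (rule LIMSEQ_le_const2) (use ps in auto)
qed

context lac begin

lemma pointwise:
  assumes z: "z \<in> unit_disc" and h: "0 < h" "h \<le> 1" and zh: "1 - h \<le> cmod z"
  shows "(1 - (cmod z)\<^sup>2) * (cmod (deriv f z))\<^sup>2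
     \<le> 4 * Sb\<^sup>2 + 4 * c * (\<Sum>k. if 1 < h * (real (n k))\<^sup>2 then (b k)\<^sup>2 * (real (n k) * cmod z ^ (n k - 1)) else 0)"
proof -
  define r where "r = cmod z"
  have r: "0 \<le> r" "r < 1" "1 - h \<le> r" using z zh by (auto simp: r_def)
  define x where "x k = real (n k) * r ^ (n k - 1)" for k
  define \<tau> where "\<tau> k = (1 < h * (real (n k))\<^sup>2)" for k
  have x0: "0 \<le> x k" for k using r by (simp add: x_def)
  have xs: "summable x" unfolding x_def by (rule lac_sum(1)[OF r(1,2)])
  have X: "suminf x \<le> c / (1 - r)" unfolding x_def by (rule lac_sum(2)[OF r(1,2)])
  have gs: "summable (\<lambda>k. b k * x k)" using deriv_f(1)[OF z] by (simp add: x_def r_def)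
  have fd: "cmod (deriv f z) \<le> (\<Sum>k. b k * x k)" using deriv_f(2)[OF z] by (simp add: x_def r_def)
  define H where "H = (\<Sum>k. if \<tau> k then 0 else b k * x k)"
  define T where "T = (\<Sum>k. if \<tau> k then b k * x k else 0)"
  define P where "P = (\<Sum>k. if \<tau> k then (b k)\<^sup>2 * x k else 0)"
  have bx0: "0 \<le> b k * x k" for k using x0 b_nonneg by simp
  have sH: "summable (\<lambda>k. if \<tau> k then 0 else b k * x k)"
    by (rule summable_comparison_test[OF _ gs]) (use bx0 in auto)
  have sT: "summable (\<lambda>k. if \<tau> k then b k * x k else 0)"
    by (rule summable_comparison_test[OF _ gs]) (use bx0 in auto)
  have b2: "(b k)\<^sup>2 * x k \<le> Sb * (b k * x k)" for k
    using mult_right_mono[OF b_le_Sb[of k] bx0[of k]] by (simp add: power2_eq_square mult.assoc)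
  have sP: "summable (\<lambda>k. if \<tau> k then (b k)\<^sup>2 * x k else 0)"
    by (rule summable_comparison_test[OF _ summable_mult[OF gs, of Sb]]) (use b2 x0 bx0 Sb_nonneg in auto)
  have gHT: "(\<Sum>k. b k * x k) = H + T"
    unfolding H_def T_def using suminf_add[OF sH sT] by (simp add: if_distrib cong: if_cong)
  define M where "M = sqrt (1 / h)"
  have M0: "0 \<le> M" using h by (simp add: M_def)
  have head: "(if \<tau> k then 0 else b k * x k) \<le> b k * M" for k
  proof (cases "\<tau> k")
    case True then show ?thesis using b_nonneg M0 by simp
  next
    case False
    then have "(real (n k))\<^sup>2 \<le> 1 / h" using h by (simp add: \<tau>_def field_simps)
    then have nM: "real (n k) \<le> M" unfolding M_def by (simp add: real_le_rsqrt)
    have "x k \<le> real (n k)" using r by (simp add: x_def power_le_one mult_left_le)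
    also have "\<dots> \<le> M" by (rule nM)
    finally show ?thesis using False b_nonneg[of k] by (simp add: mult_left_mono)
  qed
  have H0: "0 \<le> H" unfolding H_def by (rule suminf_nonneg[OF sH]) (use bx0 in auto)
  have HM: "H \<le> Sb * M" unfolding H_def Sb_def
    using suminf_le[OF head sH summable_mult2[OF b_summable, of M]] suminf_mult2[OF b_summable, of M]
    by simp
  have H2: "H\<^sup>2 \<le> Sb\<^sup>2 / h"
  proof -
    have "H\<^sup>2 \<le> (Sb * M)\<^sup>2" using H0 HM by (simp add: power_mono)
    also have "\<dots> = Sb\<^sup>2 / h" using h by (simp add: M_def power_mult_distrib)
    finally show ?thesis .
  qed
  have T0: "0 \<le> T" unfolding T_def by (rule suminf_nonneg[OF sT]) (use bx0 in auto)
  have P0: "0 \<le> P" unfolding P_def by (rule suminf_nonneg[OF sP]) (use x0 in auto)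
  have T2: "T\<^sup>2 \<le> P * suminf x"
    unfolding T_def P_def
  proof (rule series_CS[OF _ x0 sP xs sT])
    show "0 \<le> (if \<tau> k then (b k)\<^sup>2 * x k else 0)" for k using x0[of k] by simp
    show "(if \<tau> k then b k * x k else 0) = sqrt (if \<tau> k then (b k)\<^sup>2 * x k else 0) * sqrt (x k)" for k
      using x0[of k] b_nonneg[of k] by (cases "\<tau> k") (simp_all add: real_sqrt_mult mult.assoc)
  qed
  have T2': "T\<^sup>2 \<le> P * (c / (1 - r))" using T2 X P0 by (meson mult_left_mono order_trans)
  have g2: "(cmod (deriv f z))\<^sup>2 \<le> 2 * H\<^sup>2 + 2 * T\<^sup>2"
  proof -
    have "(cmod (deriv f z))\<^sup>2 \<le> (H + T)\<^sup>2" using fd gHT by (simp add: power_mono)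
    also have "\<dots> \<le> 2 * H\<^sup>2 + 2 * T\<^sup>2" using sum_squares_ge_zero[of "H - T" 0]
      by (simp add: power2_eq_square algebra_simps)
    finally show ?thesis .
  qed
  have e: "1 - r\<^sup>2 = (1 - r) * (1 + r)" by (simp add: power2_eq_square algebra_simps)
  have "(1 - r) * (1 + r) \<le> h * 2" by (rule mult_mono) (use r in auto)
  then have w1: "1 - r\<^sup>2 \<le> 2 * h" using e by simp
  have "(1 - r) * (1 + r) \<le> (1 - r) * 2" by (rule mult_left_mono) (use r in auto)
  then have w2: "1 - r\<^sup>2 \<le> 2 * (1 - r)" using e by simp
  have w0: "0 \<le> 1 - r\<^sup>2" using e r by simp
  have "(1 - r\<^sup>2) * (cmod (deriv f z))\<^sup>2 \<le> (1 - r\<^sup>2) * (2 * H\<^sup>2) + (1 - r\<^sup>2) * (2 * T\<^sup>2)"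
    using mult_left_mono[OF g2 w0] by (simp add: algebra_simps)
  also have "(1 - r\<^sup>2) * (2 * H\<^sup>2) \<le> (2 * h) * (2 * (Sb\<^sup>2 / h))"
    by (intro mult_mono w1) (use H2 h in auto)
  also have "(2 * h) * (2 * (Sb\<^sup>2 / h)) = 4 * Sb\<^sup>2" using h by simp
  also have "(1 - r\<^sup>2) * (2 * T\<^sup>2) \<le> (2 * (1 - r)) * (2 * (P * (c / (1 - r))))"
    by (intro mult_mono w2) (use T2' r in auto)
  also have "(2 * (1 - r)) * (2 * (P * (c / (1 - r)))) = 4 * c * P" using r by (simp add: field_simps)
  finally show ?thesis unfolding P_def \<tau>_def x_def r_def by simp
qed

end



definition U :: "real \<Rightarrow> real \<Rightarrow> real \<Rightarrow> complex set" where
  "U th l s = (\<Union>j\<in>{0..nat \<lfloor>l / s\<rfloor>}. ball (cis (th + real j * s)) (2 * s))"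

lemma U_open: "open (U th l s)" unfolding U_def by auto

lemma box_norm: assumes "z \<in> carleson_box th l" "l \<le> 2 * pi"
  shows "1 - l / (2 * pi) \<le> cmod z" "cmod z < 1"
proof -
  from assms obtain r t where z: "z = of_real r * cis t" and r: "1 - l / (2*pi) \<le> r" "r < 1"
    unfolding carleson_box_def by auto
  have "l / (2 * pi) \<le> 1" using assms(2) pi_gt_zero by (simp add: divide_le_eq)
  then have "0 \<le> r" using r by linarith
  then have "cmod z = r" using z by (simp add: norm_mult)
  then show "1 - l / (2 * pi) \<le> cmod z" "cmod z < 1" using r by auto
qed

lemma cover: assumes s: "0 < s" and z: "z \<in> carleson_box th l" and l: "l \<le> 2 * pi"
  and zs: "1 - s \<le> cmod z"
  shows "z \<in> U th l s"
proof -
  from z obtain r t where zrt: "z = of_real r * cis t" and t: "th \<le> t" "t \<le> th + l"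
     and r: "1 - l / (2*pi) \<le> r" "r < 1"
    unfolding carleson_box_def by auto
  have "l / (2 * pi) \<le> 1" using l pi_gt_zero by (simp add: divide_le_eq)
  then have r0: "0 \<le> r" using r by linarith
  then have cz: "cmod z = r" using zrt by (simp add: norm_mult)
  define j where "j = nat \<lfloor>(t - th) / s\<rfloor>"
  have q0: "0 \<le> (t - th) / s" using t s by simp
  have jf: "real j = of_int \<lfloor>(t - th) / s\<rfloor>" using q0 by (simp add: j_def)
  have j1: "real j \<le> (t - th) / s" using jf by simp
  have j2: "(t - th) / s < real j + 1" using jf by linarith
  have "j \<le> nat \<lfloor>l / s\<rfloor>" unfolding j_def
    using t s by (intro nat_mono floor_mono divide_right_mono) auto
  then have jin: "j \<in> {0..nat \<lfloor>l / s\<rfloor>}" by simp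
  define tj where "tj = th + real j * s"
  have d1: "0 \<le> t - tj" using j1 s by (simp add: tj_def field_simps)
  have d2: "t - tj < s" using j2 s by (simp add: tj_def field_simps)
  have "cmod (z - cis tj) \<le> cmod (z - cis t) + cmod (cis t - cis tj)"
    using norm_triangle_ineq[of "z - cis t" "cis t - cis tj"] by simp
  also have "cmod (z - cis t) = 1 - r"
  proof -
    have "cmod (z - cis t) = cmod (of_real (r - 1) * cis t)" using zrt by (simp add: algebra_simps)
    also have "\<dots> = \<bar>r - 1\<bar>" by (simp only: norm_mult norm_of_real norm_cis mult_1_right)
    also have "\<dots> = 1 - r" using r by simp
    finally show ?thesis .
  qed
  also have "cmod (cis t - cis tj) \<le> \<bar>t - tj\<bar>" by (rule cis_dist)
  finally have "cmod (z - cis tj) < 2 * s" using zs cz d1 d2 by simp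
  then have "z \<in> ball (cis tj) (2 * s)" by (simp add: dist_norm norm_minus_commute)
  then show ?thesis unfolding U_def tj_def using jin by blast
qed

lemma U_measure: assumes s: "0 < s" "s \<le> l"
  shows "emeasure lborel (U th l s) \<le> ennreal (8 * pi * l * s)"
proof -
  let ?J = "{0..nat \<lfloor>l / s\<rfloor>}"
  have "emeasure lborel (U th l s) \<le> (\<Sum>j\<in>?J. emeasure lborel (ball (cis (th + real j * s)) (2 * s)))"
    unfolding U_def by (rule emeasure_subadditive_finite) auto
  also have "\<dots> = (\<Sum>j\<in>?J. ennreal (pi * (2 * s)\<^sup>2))"
    using s by (simp add: emeasure_ball unit_ball_vol_2)
  also have "\<dots> = ennreal (real (card ?J) * (pi * (2 * s)\<^sup>2))"
    by (simp add: ennreal_of_nat_eq_real_of_nat ennreal_mult)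
  also have "\<dots> \<le> ennreal (8 * pi * l * s)"
  proof (rule ennreal_leI)
    have cJ: "real (card ?J) = real (nat \<lfloor>l / s\<rfloor>) + 1" by simp
    have "real (nat \<lfloor>l / s\<rfloor>) \<le> l / s" using s by (simp add: of_nat_nat)
    then have "real (card ?J) \<le> l / s + 1" using cJ by simp
    also have "\<dots> \<le> 2 * l / s" using s by (simp add: field_simps)
    finally have "real (card ?J) * (pi * (2 * s)\<^sup>2) \<le> 2 * l / s * (pi * (2 * s)\<^sup>2)"
      by (rule mult_right_mono) simp
    also have "\<dots> = 8 * pi * l * s" using s by (simp add: power2_eq_square field_simps)
    finally show "real (card ?J) * (pi * (2 * s)\<^sup>2) \<le> 8 * pi * l * s" .
  qed
  finally show ?thesis .
qed




lemma ring_sum: assumes m: "1 \<le> m"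
  shows "(\<Sum>j\<le>m. real (j+1) * (1 - real j / real m) ^ (m - 1)) \<le> 20"
proof (cases "m = 1")
  case True
  then show ?thesis by (simp add: atMost_Suc)
next
  case False
  then have m2: "2 \<le> m" using m by simp
  define q where "q = exp (-1/4::real)"
  have q0: "0 \<le> q" "q < 1" by (auto simp: q_def)
  have "5/4 \<le> exp (1/4::real)" using exp_ge_add_one_self[of "1/4::real"] by simp
  then have q45: "q \<le> 4/5" unfolding q_def by (simp add: exp_minus field_simps)
  have tm: "real (j+1) * (1 - real j / real m) ^ (m - 1) \<le> 4 * q ^ j" if j: "j \<le> m" for j
  proof -
    have a0: "0 \<le> 1 - real j / real m" using j m by (simp add: field_simps)
    have "1 - real j / real m \<le> exp (- (real j / real m))"
      using exp_ge_add_one_self[of "- (real j / real m)"] by simp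
    then have "(1 - real j / real m) ^ (m - 1) \<le> exp (- (real j / real m)) ^ (m - 1)"
      by (rule power_mono[OF _ a0])
    also have "\<dots> = exp (- (real j / real m) * real (m - 1))"
      by (simp add: exp_of_nat_mult[symmetric] mult.commute)
    also have "\<dots> \<le> exp (- real j / 2)"
    proof -
      have "real m \<le> 2 * real (m - 1)" using m2 by linarith
      then have "real j / 2 \<le> real j / real m * real (m - 1)"
        using m2 by (simp add: field_simps mult_left_mono)
      then show ?thesis by simp
    qed
    finally have p: "(1 - real j / real m) ^ (m - 1) \<le> exp (- real j / 2)" .
    have "real (j+1) \<le> 4 * exp (real j / 4)"
      using exp_ge_add_one_self[of "real j / 4"] by linarith
    then have "real (j+1) * (1 - real j / real m) ^ (m - 1) \<le> 4 * exp (real j / 4) * exp (- real j / 2)"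
      by (intro mult_mono p) (use a0 in auto)
    also have "\<dots> = 4 * q ^ j"
      by (simp add: q_def exp_add[symmetric] exp_of_nat_mult[symmetric] mult.commute)
    finally show ?thesis .
  qed
  have "(\<Sum>j\<le>m. real (j+1) * (1 - real j / real m) ^ (m - 1)) \<le> (\<Sum>j\<le>m. 4 * q ^ j)"
    by (rule sum_mono) (use tm in auto)
  also have "\<dots> = 4 * (\<Sum>j<Suc m. q ^ j)" by (simp add: sum_distrib_left lessThan_Suc_atMost)
  also have "(\<Sum>j<Suc m. q ^ j) \<le> 1 / (1 - q)"
  proof -
    have "(\<Sum>j<Suc m. q ^ j) = (1 - q ^ Suc m) / (1 - q)"
      using q0 sum_gp_strict[of q "Suc m"] by simp
    also have "\<dots> \<le> 1 / (1 - q)" by (rule divide_right_mono) (use q0 in auto)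
    finally show ?thesis .
  qed
  also have "1 / (1 - q) \<le> 5" using q45 q0 by (simp add: field_simps)
  finally show ?thesis by simp
qed

lemma ring_pt: assumes m: "1 \<le> m" and z: "cmod z < 1"
  shows "real m * cmod z ^ (m - 1) \<le>
    (\<Sum>j\<le>m. real m * (1 - real j / real m) ^ (m - 1) * indicator {w. 1 - real (j+1) / real m \<le> cmod w} z)"
proof -
  define \<rho> where "\<rho> = cmod z"
  have \<rho>: "0 \<le> \<rho>" "\<rho> < 1" using z by (auto simp: \<rho>_def)
  define j0 where "j0 = nat \<lfloor>real m * (1 - \<rho>)\<rfloor>"
  have x0: "0 \<le> real m * (1 - \<rho>)" using \<rho> by simp
  have jf: "real j0 = of_int \<lfloor>real m * (1 - \<rho>)\<rfloor>" using x0 by (simp add: j0_def)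
  have j1: "real j0 \<le> real m * (1 - \<rho>)" using jf by simp
  have j2: "real m * (1 - \<rho>) < real j0 + 1" using jf by linarith
  have "real j0 \<le> real m" using j1 \<rho> m by (smt (verit) mult_left_le of_nat_0_le_iff)
  then have j0m: "j0 \<le> m" by simp
  have mpos: "0 < real m" using m by simp
  have up: "\<rho> \<le> 1 - real j0 / real m" using j1 mpos by (simp add: field_simps)
  have lo: "1 - real (j0+1) / real m \<le> \<rho>" using j2 mpos by (simp add: field_simps)
  have nn: "0 \<le> real m * (1 - real j / real m) ^ (m - 1) * indicator {w. 1 - real (j+1) / real m \<le> cmod w} z"
    if "j \<in> {..m}" for j
  proof -
    have "0 \<le> 1 - real j / real m" using that mpos by (simp add: field_simps)
    then show ?thesis by simp
  qed
  have "real m * cmod z ^ (m - 1) \<le> real m * (1 - real j0 / real m) ^ (m - 1)"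
    unfolding \<rho>_def[symmetric] by (intro mult_left_mono power_mono up \<rho>) simp
  also have "\<dots> = real m * (1 - real j0 / real m) ^ (m - 1) * indicator {w. 1 - real (j0+1) / real m \<le> cmod w} z"
    using lo by (simp add: \<rho>_def)
  also have "\<dots> \<le> (\<Sum>j\<le>m. real m * (1 - real j / real m) ^ (m - 1) * indicator {w. 1 - real (j+1) / real m \<le> cmod w} z)"
    by (rule member_le_sum[where f = "\<lambda>j. real m * (1 - real j / real m) ^ (m - 1) * indicator {w. 1 - real (j+1) / real m \<le> cmod w} z", OF _ nn]) (use j0m in auto)
  finally show ?thesis .
qed




definition R :: "real \<Rightarrow> real \<Rightarrow> nat \<Rightarrow> complex \<Rightarrow> ennreal" where
  "R th l m z = (\<Sum>j\<le>m. ennreal (real m * (1 - real j / real m) ^ (m - 1)) *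
       indicator (U th l (min (real (j+1) / real m) (l / (2*pi)))) z)"

lemma R_meas[measurable]: "R th l m \<in> borel_measurable lborel"
  unfolding R_def using U_open by (intro borel_measurable_sum) (auto intro!: borel_measurable_indicator borel_open)

lemma R_pt: assumes m: "1 \<le> m" and z: "z \<in> carleson_box th l" and l: "0 < l" "l \<le> 2 * pi"
  shows "ennreal (real m * cmod z ^ (m - 1)) \<le> R th l m z"
proof -
  have zb: "1 - l / (2 * pi) \<le> cmod z" "cmod z < 1" using box_norm[OF z l(2)] by auto
  have mpos: "0 < real m" using m by simp
  have ind: "indicator {w. 1 - real (j+1) / real m \<le> cmod w} z
      \<le> (indicator (U th l (min (real (j+1) / real m) (l / (2*pi)))) z :: real)" for j
  proof (cases "1 - real (j+1) / real m \<le> cmod z")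
    case True
    have "z \<in> U th l (min (real (j+1) / real m) (l / (2*pi)))"
      by (rule cover[OF _ z l(2)]) (use True zb mpos l in auto)
    then show ?thesis by simp
  qed simp
  have e0: "0 \<le> real m * (1 - real j / real m) ^ (m - 1)" if "j \<le> m" for j
    using that mpos by (simp add: field_simps)
  have "real m * cmod z ^ (m - 1) \<le>
    (\<Sum>j\<le>m. real m * (1 - real j / real m) ^ (m - 1) * indicator {w. 1 - real (j+1) / real m \<le> cmod w} z)"
    by (rule ring_pt[OF m zb(2)])
  also have "\<dots> \<le> (\<Sum>j\<le>m. real m * (1 - real j / real m) ^ (m - 1) * indicator (U th l (min (real (j+1) / real m) (l / (2*pi)))) z)"
    by (rule sum_mono) (use ind e0 in \<open>auto intro: mult_left_mono\<close>)
  finally have "ennreal (real m * cmod z ^ (m - 1)) \<le> ennreal (\<Sum>j\<le>m. real m * (1 - real j / real m) ^ (m - 1) * indicator (U th l (min (real (j+1) / real m) (l / (2*pi)))) z)"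
    by (rule ennreal_leI)
  also have "\<dots> = R th l m z" unfolding R_def
  proof (subst sum_ennreal[symmetric])
    show "0 \<le> real m * (1 - real j / real m) ^ (m - 1) * indicator (U th l (min (real (j+1) / real m) (l / (2*pi)))) z"
      if "j \<in> {..m}" for j using e0[of j] that by simp
    show "(\<Sum>j\<le>m. ennreal (real m * (1 - real j / real m) ^ (m - 1) * indicator (U th l (min (real (j+1) / real m) (l / (2*pi)))) z)) =
      (\<Sum>j\<le>m. ennreal (real m * (1 - real j / real m) ^ (m - 1)) * indicator (U th l (min (real (j+1) / real m) (l / (2*pi)))) z)"
      by (rule sum.cong) (use e0 in \<open>auto simp: ennreal_mult' ennreal_indicator\<close>)
  qed
  finally show ?thesis .
qed

lemma R_int: assumes m: "1 \<le> m" and l: "0 < l" "l \<le> 2 * pi"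
  shows "(\<integral>\<^sup>+ z. R th l m z \<partial>lborel) \<le> ennreal (160 * pi * l)"
proof -
  define h where "h = l / (2 * pi)"
  have h: "0 < h" "h \<le> l" using l pi_gt3 by (auto simp: h_def field_simps)
  define s where "s j = min (real (j+1) / real m) h" for j
  have s: "0 < s j" "s j \<le> l" for j using h m by (auto simp: s_def)
  define e where "e j = real m * (1 - real j / real m) ^ (m - 1)" for j
  have mpos: "0 < real m" using m by simp
  have e0: "0 \<le> e j" if "j \<le> m" for j using that mpos by (simp add: e_def field_simps)
  have "(\<integral>\<^sup>+ z. R th l m z \<partial>lborel) = (\<Sum>j\<le>m. ennreal (e j) * emeasure lborel (U th l (s j)))"
    unfolding R_def e_def s_def h_def using U_open
    by (subst nn_integral_sum) (auto intro!: borel_open nn_integral_cmult_indicator sum.cong)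
  also have "\<dots> \<le> (\<Sum>j\<le>m. ennreal (e j) * ennreal (8 * pi * l * s j))"
    by (intro sum_mono mult_left_mono U_measure s) auto
  also have "\<dots> = ennreal (\<Sum>j\<le>m. e j * (8 * pi * l * s j))"
  proof -
    have sl: "0 \<le> s j" for j using s(1)[of j] by simp
    have p: "0 \<le> 8 * pi * l * s j" for j using sl[of j] l by simp
    show ?thesis
      by (subst sum_ennreal[symmetric]) (use e0 p in \<open>auto simp: ennreal_mult'[symmetric] intro!: sum.cong\<close>)
  qed
  also have "\<dots> \<le> ennreal (160 * pi * l)"
  proof (rule ennreal_leI)
    have "e j * (8 * pi * l * s j) \<le> 8 * pi * l * (real (j+1) * (1 - real j / real m) ^ (m - 1))" if "j \<le> m" for j
    proof -
      have "e j * s j \<le> e j * (real (j+1) / real m)" using e0[OF that] by (intro mult_left_mono) (auto simp: s_def)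
      also have "\<dots> = real (j+1) * (1 - real j / real m) ^ (m - 1)" using mpos by (simp add: e_def)
      finally have "e j * s j \<le> real (j+1) * (1 - real j / real m) ^ (m - 1)" .
      then show ?thesis using l by (simp add: mult_left_mono mult.left_commute[of _ "8 * pi * l"] mult.assoc)
    qed
    then have "(\<Sum>j\<le>m. e j * (8 * pi * l * s j)) \<le> (\<Sum>j\<le>m. 8 * pi * l * (real (j+1) * (1 - real j / real m) ^ (m - 1)))"
      by (intro sum_mono) auto
    also have "\<dots> = 8 * pi * l * (\<Sum>j\<le>m. real (j+1) * (1 - real j / real m) ^ (m - 1))"
      by (simp add: sum_distrib_left)
    also have "\<dots> \<le> 8 * pi * l * 20" using ring_sum[OF m] l by (intro mult_left_mono) auto
    finally show "(\<Sum>j\<le>m. e j * (8 * pi * l * s j)) \<le> 160 * pi * l" by simp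
  qed
  finally show ?thesis .
qed




context lac begin

lemma tau_summable: "summable (\<lambda>k. if 1 < h * (real (n k))\<^sup>2 then (b k)\<^sup>2 else 0)"
proof (rule summable_comparison_test[OF _ summable_mult[OF b_summable, of Sb]])
  show "\<exists>N. \<forall>k\<ge>N. norm (if 1 < h * (real (n k))\<^sup>2 then (b k)\<^sup>2 else 0) \<le> Sb * b k"
    using b_le_Sb b_nonneg Sb_nonneg by (auto simp: power2_eq_square mult_right_mono)
qed

lemma box_bound: assumes l: "0 < l" "l \<le> 2 * pi"
  shows "(\<integral>\<^sup>+ z \<in> carleson_box th l. ennreal ((1 - (cmod z)\<^sup>2) * (cmod (deriv f z))\<^sup>2 / pi) \<partial>lborel)
    \<le> ennreal (32 * Sb\<^sup>2 * l * (l / (2*pi)) + 640 * c * l *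
         (\<Sum>k. if 1 < (l / (2*pi)) * (real (n k))\<^sup>2 then (b k)\<^sup>2 else 0))"
proof -
  define h where "h = l / (2 * pi)"
  have h: "0 < h" "h \<le> 1" "h \<le> l" using l pi_gt3 by (auto simp: h_def field_simps)
  define w where "w k = 4 * c / pi * (if 1 < h * (real (n k))\<^sup>2 then (b k)\<^sup>2 else 0)" for k
  have w0: "0 \<le> w k" for k using c_ge1 by (simp add: w_def)
  have ws: "summable w" unfolding w_def by (rule summable_mult[OF tau_summable])
  define A where "A = 4 * Sb\<^sup>2 / pi"
  have A0: "0 \<le> A" by (simp add: A_def)
  have pt: "ennreal ((1 - (cmod z)\<^sup>2) * (cmod (deriv f z))\<^sup>2 / pi) * indicator (carleson_box th l) z
      \<le> ennreal A * indicator (U th l h) z + (\<Sum>k. ennreal (w k) * R th l (n k) z)" for z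
  proof (cases "z \<in> carleson_box th l")
    case False then show ?thesis by simp
  next
    case True
    have zb: "1 - h \<le> cmod z" "cmod z < 1" using box_norm[OF True l(2)] by (auto simp: h_def)
    have zD: "z \<in> unit_disc" using zb by simp
    have zU: "z \<in> U th l h" by (rule cover[OF h(1) True l(2) zb(1)])
    define x where "x k = real (n k) * cmod z ^ (n k - 1)" for k
    have x0: "0 \<le> x k" for k by (simp add: x_def)
    have xs: "summable x" unfolding x_def by (rule lac_sum(1)) (use zb in auto)
    have wx: "summable (\<lambda>k. w k * x k)"
    proof (rule summable_comparison_test[OF _ summable_mult[OF deriv_f(1)[OF zD], of "4 * c / pi * Sb"]])
      show "\<exists>N. \<forall>k\<ge>N. norm (w k * x k) \<le> 4 * c / pi * Sb * (b k * (real (n k) * cmod z ^ (n k - 1)))"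
      proof (intro exI allI impI)
        fix k :: nat
        have "(if 1 < h * (real (n k))\<^sup>2 then (b k)\<^sup>2 else 0) \<le> Sb * b k"
          using b_le_Sb[of k] b_nonneg[of k] by (auto simp: power2_eq_square mult_right_mono)
        then have "w k \<le> 4 * c / pi * (Sb * b k)" unfolding w_def using c_ge1 by (intro mult_left_mono) auto
        then have "w k * x k \<le> 4 * c / pi * (Sb * b k) * x k" by (rule mult_right_mono[OF _ x0])
        then show "norm (w k * x k) \<le> 4 * c / pi * Sb * (b k * (real (n k) * cmod z ^ (n k - 1)))"
          using w0[of k] x0[of k] by (simp add: x_def mult.assoc)
      qed
    qed
    have P: "(1 - (cmod z)\<^sup>2) * (cmod (deriv f z))\<^sup>2
     \<le> 4 * Sb\<^sup>2 + 4 * c * (\<Sum>k. if 1 < h * (real (n k))\<^sup>2 then (b k)\<^sup>2 * x k else 0)"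
      unfolding x_def by (rule pointwise[OF zD h(1,2) zb(1)])
    have "(\<Sum>k. w k * x k) = 4 * c / pi * (\<Sum>k. if 1 < h * (real (n k))\<^sup>2 then (b k)\<^sup>2 * x k else 0)"
    proof -
      have "(\<lambda>k. w k * x k) = (\<lambda>k. 4 * c / pi * (if 1 < h * (real (n k))\<^sup>2 then (b k)\<^sup>2 * x k else 0))"
        by (auto simp: w_def)
      moreover have S: "summable (\<lambda>k. if 1 < h * (real (n k))\<^sup>2 then (b k)\<^sup>2 * x k else 0)"
      proof (rule summable_comparison_test[OF _ summable_mult[OF deriv_f(1)[OF zD], of Sb]])
        show "\<exists>N. \<forall>k\<ge>N. norm (if 1 < h * (real (n k))\<^sup>2 then (b k)\<^sup>2 * x k else 0) \<le> Sb * (b k * (real (n k) * cmod z ^ (n k - 1)))"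
        proof (intro exI allI impI)
          fix k :: nat
          have "(b k)\<^sup>2 * x k \<le> Sb * (b k * x k)"
            using mult_right_mono[OF b_le_Sb[of k], of "b k * x k"] b_nonneg[of k] x0[of k]
            by (simp add: power2_eq_square mult.assoc)
          then show "norm (if 1 < h * (real (n k))\<^sup>2 then (b k)\<^sup>2 * x k else 0) \<le> Sb * (b k * (real (n k) * cmod z ^ (n k - 1)))"
            using b_nonneg[of k] x0[of k] Sb_nonneg by (auto simp: x_def)
        qed
      qed
      ultimately show ?thesis using suminf_mult[OF S, of "4 * c / pi"] by simp
    qed
    then have real: "(1 - (cmod z)\<^sup>2) * (cmod (deriv f z))\<^sup>2 / pi \<le> A + (\<Sum>k. w k * x k)"
    proof -
      have "(1 - (cmod z)\<^sup>2) * (cmod (deriv f z))\<^sup>2 / pi \<le> (4 * Sb\<^sup>2 + 4 * c * (\<Sum>k. if 1 < h * (real (n k))\<^sup>2 then (b k)\<^sup>2 * x k else 0)) / pi"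
        by (rule divide_right_mono[OF P]) simp
      also have "\<dots> = A + 4 * c / pi * (\<Sum>k. if 1 < h * (real (n k))\<^sup>2 then (b k)\<^sup>2 * x k else 0)"
        by (simp add: A_def add_divide_distrib)
      finally show ?thesis using \<open>(\<Sum>k. w k * x k) = _\<close> by simp
    qed
    have "ennreal ((1 - (cmod z)\<^sup>2) * (cmod (deriv f z))\<^sup>2 / pi) * indicator (carleson_box th l) z
        = ennreal ((1 - (cmod z)\<^sup>2) * (cmod (deriv f z))\<^sup>2 / pi)" using True by simp
    also have "\<dots> \<le> ennreal (A + (\<Sum>k. w k * x k))" by (rule ennreal_leI[OF real])
    also have "\<dots> = ennreal A + (\<Sum>k. ennreal (w k) * ennreal (x k))"
    proof -
      have S0: "0 \<le> (\<Sum>k. w k * x k)" by (rule suminf_nonneg[OF wx]) (use w0 x0 in auto)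
      have "ennreal (\<Sum>k. w k * x k) = (\<Sum>k. ennreal (w k * x k))"
        by (rule suminf_ennreal2[symmetric]) (use w0 x0 wx in auto)
      also have "\<dots> = (\<Sum>k. ennreal (w k) * ennreal (x k))" by (simp only: ennreal_mult'[OF w0])
      finally show ?thesis by (simp only: ennreal_plus[OF A0 S0])
    qed
    also have "\<dots> \<le> ennreal A * indicator (U th l h) z + (\<Sum>k. ennreal (w k) * R th l (n k) z)"
    proof -
      have "ennreal (x k) \<le> R th l (n k) z" for k
        unfolding x_def using npos[of k] by (intro R_pt[OF _ True l]) auto
      then have "(\<Sum>k. ennreal (w k) * ennreal (x k)) \<le> (\<Sum>k. ennreal (w k) * R th l (n k) z)"
        by (intro suminf_le mult_left_mono summableI) auto
      then show ?thesis using zU by (simp add: add_left_mono)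
    qed
    finally show ?thesis .
  qed
  have "(\<integral>\<^sup>+ z \<in> carleson_box th l. ennreal ((1 - (cmod z)\<^sup>2) * (cmod (deriv f z))\<^sup>2 / pi) \<partial>lborel)
      \<le> (\<integral>\<^sup>+ z. ennreal A * indicator (U th l h) z + (\<Sum>k. ennreal (w k) * R th l (n k) z) \<partial>lborel)"
    by (rule nn_integral_mono) (rule pt)
  also have "\<dots> = ennreal A * emeasure lborel (U th l h) + (\<Sum>k. ennreal (w k) * (\<integral>\<^sup>+ z. R th l (n k) z \<partial>lborel))"
  proof -
    have m1: "(\<lambda>z. ennreal A * indicator (U th l h) z) \<in> borel_measurable lborel"
      using U_open by (auto intro!: borel_measurable_indicator borel_open)
    have m2: "(\<lambda>z. \<Sum>k. ennreal (w k) * R th l (n k) z) \<in> borel_measurable lborel" by measurable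
    have "(\<integral>\<^sup>+ z. ennreal A * indicator (U th l h) z + (\<Sum>k. ennreal (w k) * R th l (n k) z) \<partial>lborel)
        = (\<integral>\<^sup>+ z. ennreal A * indicator (U th l h) z \<partial>lborel) + (\<integral>\<^sup>+ z. (\<Sum>k. ennreal (w k) * R th l (n k) z) \<partial>lborel)"
      by (rule nn_integral_add[OF m1 m2])
    also have "(\<integral>\<^sup>+ z. ennreal A * indicator (U th l h) z \<partial>lborel) = ennreal A * emeasure lborel (U th l h)"
      by (rule nn_integral_cmult_indicator) (use U_open in \<open>auto intro: borel_open\<close>)
    also have "(\<integral>\<^sup>+ z. (\<Sum>k. ennreal (w k) * R th l (n k) z) \<partial>lborel) = (\<Sum>k. (\<integral>\<^sup>+ z. ennreal (w k) * R th l (n k) z \<partial>lborel))"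
      by (rule nn_integral_suminf) measurable
    also have "\<dots> = (\<Sum>k. ennreal (w k) * (\<integral>\<^sup>+ z. R th l (n k) z \<partial>lborel))"
      by (rule suminf_cong, rule nn_integral_cmult) measurable
    finally show ?thesis .
  qed
  also have "\<dots> \<le> ennreal A * ennreal (8 * pi * l * h) + (\<Sum>k. ennreal (w k) * ennreal (160 * pi * l))"
  proof (rule add_mono)
    show "ennreal A * emeasure lborel (U th l h) \<le> ennreal A * ennreal (8 * pi * l * h)"
      by (rule mult_left_mono[OF U_measure[OF h(1) h(3)]]) simp
    show "(\<Sum>k. ennreal (w k) * (\<integral>\<^sup>+ z. R th l (n k) z \<partial>lborel)) \<le> (\<Sum>k. ennreal (w k) * ennreal (160 * pi * l))"
    proof (rule suminf_le)
      show "ennreal (w k) * (\<integral>\<^sup>+ z. R th l (n k) z \<partial>lborel) \<le> ennreal (w k) * ennreal (160 * pi * l)" for k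
        using npos[of k] by (intro mult_left_mono R_int l) auto
    qed (rule summableI)+
  qed
  also have "\<dots> = ennreal (32 * Sb\<^sup>2 * l * h + 640 * c * l * (\<Sum>k. if 1 < h * (real (n k))\<^sup>2 then (b k)\<^sup>2 else 0))"
  proof -
    have "ennreal A * ennreal (8 * pi * l * h) = ennreal (32 * Sb\<^sup>2 * l * h)"
      using ennreal_mult'[OF A0, of "8 * pi * l * h"] by (simp add: A_def mult.assoc)
    moreover have "(\<Sum>k. ennreal (w k) * ennreal (160 * pi * l)) = ennreal (\<Sum>k. w k * (160 * pi * l))"
    proof -
      have "(\<Sum>k. ennreal (w k) * ennreal (160 * pi * l)) = (\<Sum>k. ennreal (w k * (160 * pi * l)))"
        by (simp only: ennreal_mult'[OF w0])
      also have "\<dots> = ennreal (\<Sum>k. w k * (160 * pi * l))"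
        by (rule suminf_ennreal2) (use w0 l summable_mult2[OF ws] in auto)
      finally show ?thesis .
    qed
    moreover have "(\<Sum>k. w k * (160 * pi * l)) = 640 * c * l * (\<Sum>k. if 1 < h * (real (n k))\<^sup>2 then (b k)\<^sup>2 else 0)"
    proof -
      have "(\<lambda>k. w k * (160 * pi * l)) = (\<lambda>k. 640 * c * l * (if 1 < h * (real (n k))\<^sup>2 then (b k)\<^sup>2 else 0))"
        by (auto simp: w_def)
      then show ?thesis using suminf_mult[OF tau_summable, of "640 * c * l"] by simp
    qed
    moreover have "0 \<le> 32 * Sb\<^sup>2 * l * h" using l h by simp
    moreover have "0 \<le> 640 * c * l * (\<Sum>k. if 1 < h * (real (n k))\<^sup>2 then (b k)\<^sup>2 else 0)"
      using l c_ge1 suminf_nonneg[OF tau_summable] by simp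
    ultimately show ?thesis by (simp only: ennreal_plus)
  qed
  finally show ?thesis unfolding h_def .
qed

end



lemma lin_aux1: "(a::real) \<le> 1 \<Longrightarrow> y \<le> 1 \<Longrightarrow> 0 \<le> c \<Longrightarrow> 1 + 4 * y + 4 * a \<le> 9 + 9 * c"
  by linarith
lemma lin_aux2: "(y::real) \<le> c \<Longrightarrow> a \<le> c \<Longrightarrow> 0 \<le> c \<Longrightarrow> 1 + 4 * y + 4 * a \<le> 9 + 9 * c"
  by linarith

lemma poly_aux: assumes y: "0 \<le> (y::real)" shows "(1 + 2 * y)\<^sup>2 \<le> 9 * (1 + y ^ 3)"
proof -
  have ex: "(1 + 2 * y)\<^sup>2 = 1 + 4 * y + 4 * y\<^sup>2" by (simp add: power2_eq_square algebra_simps)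
  have y3: "0 \<le> y ^ 3" using y by simp
  have "(1 + 2 * y)\<^sup>2 \<le> 9 + 9 * y ^ 3"
  proof (cases "y \<le> 1")
    case True
    have "y\<^sup>2 \<le> 1" using True y by (simp add: power_le_one)
    then show ?thesis unfolding ex using lin_aux1 True y3 by blast
  next
    case False
    have y21: "1 \<le> y\<^sup>2" using False by (simp add: one_le_power)
    have "y * 1 \<le> y * y\<^sup>2" by (rule mult_left_mono[OF y21 y])
    then have a1: "y \<le> y ^ 3" by (simp add: power2_eq_square power3_eq_cube)
    have "y\<^sup>2 * 1 \<le> y\<^sup>2 * y" using False by (intro mult_left_mono) auto
    then have a2: "y\<^sup>2 \<le> y ^ 3" by (simp add: power2_eq_square power3_eq_cube)
    show ?thesis unfolding ex using lin_aux2 a1 a2 y3 by blast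
  qed
  then show ?thesis by (simp add: distrib_left)
qed

lemma exp_aux: assumes u: "0 \<le> (u::real)" shows "(1 + u)\<^sup>2 \<le> 4 * exp u"
proof -
  have e: "1 + u / 2 \<le> exp (u / 2)" by (rule exp_ge_add_one_self)
  have "(1 + u)\<^sup>2 \<le> (2 * (1 + u / 2))\<^sup>2" using u by (intro power_mono) auto
  also have "\<dots> \<le> (2 * exp (u / 2))\<^sup>2"
  proof -
    have "2 * (1 + u / 2) \<le> 2 * exp (u / 2)" using mult_left_mono[OF e, of 2] by simp
    then show ?thesis by (rule power_mono) (use u in simp)
  qed
  also have "\<dots> = 4 * exp u" by (simp add: power2_eq_square exp_add[symmetric])
  finally show ?thesis .
qed

lemma ln_pi_le2: "ln pi \<le> 2"
proof -
  have "2 \<le> exp (1::real)" using exp_ge_add_one_self[of 1] by simp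
  then have "2 * 2 \<le> exp (1::real) * exp 1" using mult_mono[OF \<open>2 \<le> exp 1\<close> \<open>2 \<le> exp 1\<close>] by simp
  then have "pi \<le> exp 2" using pi_less_4 by (simp add: exp_add[symmetric])
  then have "ln pi \<le> ln (exp 2)" using pi_gt_zero by (subst ln_le_cancel_iff) auto
  then show ?thesis by simp
qed

context lac begin

definition B2 where "B2 = (\<Sum>k. (b k)\<^sup>2 * (1 + (ln (real (n k))) ^ 3))"

lemma B2_summable: "summable (\<lambda>k. (b k)\<^sup>2 * (1 + (ln (real (n k))) ^ 3))"
proof -
  have s1: "summable (\<lambda>k. (b k)\<^sup>2)"
    by (rule summable_comparison_test[OF _ summable_mult[OF b_summable, of Sb]])
       (use b_le_Sb b_nonneg Sb_nonneg in \<open>auto simp: power2_eq_square mult_right_mono\<close>)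
  have "summable (\<lambda>k. (b k)\<^sup>2 + (b k)\<^sup>2 * (ln (real (n k))) ^ 3)"
    using s1 summ by (intro summable_add) (auto simp: b_def)
  then show ?thesis by (simp add: algebra_simps)
qed

lemma numeric: assumes l: "0 < l" "l \<le> 2 * pi" "l \<noteq> 2"
  shows "32 * Sb\<^sup>2 * l * (l / (2*pi)) + 640 * c * l *
         (\<Sum>k. if 1 < (l / (2*pi)) * (real (n k))\<^sup>2 then (b k)\<^sup>2 else 0)
     \<le> (4 * (128 * Sb\<^sup>2 + 5760 * c * B2) + 1) * l / (ln (2 / l))\<^sup>2"
proof -
  define h where "h = l / (2 * pi)"
  have h: "0 < h" "h \<le> 1" using l pi_gt3 by (auto simp: h_def field_simps)
  define u where "u = - ln h"
  have u: "0 \<le> u" using h by (simp add: u_def)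
  have eu: "exp u = 1 / h" using h by (simp add: u_def exp_minus inverse_eq_divide)
  define D where "D = 128 * Sb\<^sup>2 + 5760 * c * B2"
  have B20: "0 \<le> B2" unfolding B2_def by (rule suminf_nonneg[OF B2_summable]) (simp add: ln_n_nonneg)
  have D0: "0 \<le> D" using B20 c_ge1 by (simp add: D_def)
  have pu: "0 < (1 + u)\<^sup>2" using u by simp
  have a: "h * (1 + u)\<^sup>2 \<le> 4"
  proof -
    have "h * (1 + u)\<^sup>2 \<le> h * (4 * exp u)" using exp_aux[OF u] h by simp
    also have "\<dots> = 4" using eu h by simp
    finally show ?thesis .
  qed
  have tb: "(if 1 < h * (real (n k))\<^sup>2 then (b k)\<^sup>2 else 0) \<le> 9 * ((b k)\<^sup>2 * (1 + (ln (real (n k))) ^ 3)) / (1 + u)\<^sup>2" for k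
  proof (cases "1 < h * (real (n k))\<^sup>2")
    case True
    have np: "0 < real (n k)" using npos[of k] by simp
    have "0 < ln (h * (real (n k))\<^sup>2)" using True by simp
    also have "ln (h * (real (n k))\<^sup>2) = ln h + 2 * ln (real (n k))"
      using h np by (simp add: ln_mult ln_realpow)
    finally have "u < 2 * ln (real (n k))" by (simp add: u_def)
    then have "(1 + u)\<^sup>2 \<le> (1 + 2 * ln (real (n k)))\<^sup>2" using u by (intro power_mono) auto
    also have "\<dots> \<le> 9 * (1 + (ln (real (n k))) ^ 3)" by (rule poly_aux[OF ln_n_nonneg])
    finally have "(b k)\<^sup>2 * (1 + u)\<^sup>2 \<le> (b k)\<^sup>2 * (9 * (1 + (ln (real (n k))) ^ 3))"
      by (rule mult_left_mono) simp
    then show ?thesis using True pu by (simp add: field_simps)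
  next
    case False
    have "0 \<le> 1 + (ln (real (n k))) ^ 3" using ln_n_nonneg[of k] by simp
    then show ?thesis using False by simp
  qed
  have sB: "summable (\<lambda>k. 9 * ((b k)\<^sup>2 * (1 + (ln (real (n k))) ^ 3)) / (1 + u)\<^sup>2)"
    using B2_summable by (intro summable_divide summable_mult)
  have sum: "(\<Sum>k. if 1 < h * (real (n k))\<^sup>2 then (b k)\<^sup>2 else 0) \<le> 9 * B2 / (1 + u)\<^sup>2"
  proof -
    have "(\<Sum>k. if 1 < h * (real (n k))\<^sup>2 then (b k)\<^sup>2 else 0) \<le> (\<Sum>k. 9 * ((b k)\<^sup>2 * (1 + (ln (real (n k))) ^ 3)) / (1 + u)\<^sup>2)"
      by (rule suminf_le[OF tb tau_summable sB])
    also have "\<dots> = 9 * B2 / (1 + u)\<^sup>2" unfolding B2_def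
      using suminf_divide[OF summable_mult[OF B2_summable, of 9], of "(1+u)\<^sup>2"] suminf_mult[OF B2_summable, of 9]
      by simp
    finally show ?thesis .
  qed
  have lhs: "32 * Sb\<^sup>2 * l * h + 640 * c * l * (\<Sum>k. if 1 < h * (real (n k))\<^sup>2 then (b k)\<^sup>2 else 0)
       \<le> l * D / (1 + u)\<^sup>2"
  proof -
    have "32 * Sb\<^sup>2 * l * h = 32 * Sb\<^sup>2 * l * (h * (1 + u)\<^sup>2) / (1 + u)\<^sup>2" using pu by simp
    also have "\<dots> \<le> 32 * Sb\<^sup>2 * l * 4 / (1 + u)\<^sup>2"
      using a l pu by (intro divide_right_mono mult_left_mono) auto
    finally have t1: "32 * Sb\<^sup>2 * l * h \<le> 128 * Sb\<^sup>2 * l / (1 + u)\<^sup>2" by simp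
    have t2: "640 * c * l * (\<Sum>k. if 1 < h * (real (n k))\<^sup>2 then (b k)\<^sup>2 else 0) \<le> 640 * c * l * (9 * B2 / (1 + u)\<^sup>2)"
      using sum l c_ge1 by (intro mult_left_mono) auto
    have "128 * Sb\<^sup>2 * l / (1 + u)\<^sup>2 + 640 * c * l * (9 * B2 / (1 + u)\<^sup>2) = l * D / (1 + u)\<^sup>2"
      using pu by (simp add: D_def field_simps)
    then show ?thesis using t1 t2 by linarith
  qed
  define L where "L = ln (2 / l)"
  have L: "L = u - ln pi"
  proof -
    have "2 / l = (1 / h) / pi" using h by (simp add: h_def field_simps)
    then show ?thesis using h pi_gt_zero by (simp add: L_def u_def ln_div ln_mult)
  qed
  have L0: "0 < L\<^sup>2"
  proof -
    have "2 / l \<noteq> 1" using l by (simp add: field_simps)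
    moreover have "0 < 2 / l" using l by simp
    ultimately have "L \<noteq> 0" unfolding L_def by simp
    then show ?thesis by simp
  qed
  have L4: "L\<^sup>2 \<le> 4 * (1 + u)\<^sup>2"
  proof -
    have lp: "0 \<le> ln pi" "ln pi \<le> 2" using ln_pi_le2 pi_gt3 by auto
    have "L\<^sup>2 = u\<^sup>2 - 2 * u * ln pi + (ln pi)\<^sup>2" unfolding L by (simp add: power2_eq_square algebra_simps)
    also have "\<dots> \<le> u\<^sup>2 + 4"
    proof -
      have "0 \<le> u * ln pi" using lp u by simp
      moreover have "(ln pi)\<^sup>2 \<le> 2\<^sup>2" using lp by (intro power_mono) auto
      ultimately show ?thesis by simp
    qed
    also have "\<dots> \<le> 4 * (1 + u)\<^sup>2" using u by (simp add: power2_eq_square algebra_simps)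
    finally show ?thesis .
  qed
  have "l * D / (1 + u)\<^sup>2 \<le> l * D * 4 / L\<^sup>2"
  proof -
    have "l * D / (1 + u)\<^sup>2 = l * D * 4 / (4 * (1 + u)\<^sup>2)" by simp
    also have "\<dots> \<le> l * D * 4 / L\<^sup>2"
      using L0 L4 l D0 mult_pos_pos[OF L0 pu] by (intro divide_left_mono) auto
    finally show ?thesis .
  qed
  also have "\<dots> \<le> (4 * D + 1) * l / L\<^sup>2" using L0 l by (intro divide_right_mono) (auto simp: algebra_simps)
  finally show ?thesis using lhs unfolding L_def D_def h_def by simp
qed

end

theorem mainTheorem11:
  fixes a :: "nat \<Rightarrow> complex" and n :: "nat \<Rightarrow> nat"
    and f :: "complex \<Rightarrow> complex" and lam :: real
  assumes "\<And>k. n k > 0"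
    and "lam > 1"
    and "\<And>k. real (n (Suc k)) \<ge> lam * real (n k)"
    and "f holomorphic_on unit_disc"
    and "\<And>z. z \<in> unit_disc \<Longrightarrow> (\<lambda>k. a k * z ^ n k) sums f z"
    and "summable (\<lambda>k. (cmod (a k))\<^sup>2 * (ln (real (n k))) ^ 3)"
  shows "f \<in> BMOA_log \<inter> Hinf"
proof -
  interpret lac a n f lam by (rule lac.intro) (use assms in auto)
  define C where "C = 4 * (128 * Sb\<^sup>2 + 5760 * c * B2) + 1"
  have B20: "0 \<le> B2" unfolding B2_def by (rule suminf_nonneg[OF B2_summable]) (simp add: ln_n_nonneg)
  have cB: "0 \<le> c * B2" using B20 c_ge1 by simp
  have sS: "0 \<le> Sb\<^sup>2" by simp
  have X0: "0 \<le> 128 * Sb\<^sup>2 + 5760 * c * B2" using cB sS by (simp add: mult.assoc)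
  have X4: "0 \<le> 4 * (128 * Sb\<^sup>2 + 5760 * c * B2)" using X0 by (rule mult_nonneg_nonneg[rotated]) simp
  have C0: "C > 0" unfolding C_def using X4 by linarith
  have bound: "(\<integral>\<^sup>+ z \<in> carleson_box th l. ennreal ((1 - (cmod z)\<^sup>2) * (cmod (deriv f z))\<^sup>2 / pi) \<partial>lborel)
        \<le> ennreal (C * l / (ln (2 / l))\<^sup>2)" if l: "0 < l" "l \<le> 2 * pi" "l \<noteq> 2" for th l
  proof -
    have "(\<integral>\<^sup>+ z \<in> carleson_box th l. ennreal ((1 - (cmod z)\<^sup>2) * (cmod (deriv f z))\<^sup>2 / pi) \<partial>lborel)
       \<le> ennreal (32 * Sb\<^sup>2 * l * (l / (2*pi)) + 640 * c * l *
         (\<Sum>k. if 1 < (l / (2*pi)) * (real (n k))\<^sup>2 then (b k)\<^sup>2 else 0))"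
      by (rule box_bound) (use l in auto)
    also have "\<dots> \<le> ennreal (C * l / (ln (2 / l))\<^sup>2)"
      unfolding C_def by (rule ennreal_leI[OF numeric[OF l]])
    finally show ?thesis .
  qed
  have "f \<in> BMOA_log" unfolding BMOA_log_def
    using f_H1 C0 bound by blast
  then show ?thesis using f_Hinf by simp
qed

end
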